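(* Let $n,m\ge0$ be integers, $d_1,\ldots,d_m$ positive integers, and $g_\bullet=|n;d_1,\ldots,d_m|$. (1) If $n\ge1$, then $|n;d_1,\ldots,d_m,1|=|n-1;d_1,\ldots,d_m|$. (2) For a positive integer $s$, if $h_\bullet=|n;d_1,\ldots,d_m,s|$, then with $g_j=0$ for $j<0$ and $t=\min\{d\ge0: g_d\le g_{d-s}\}$, one has $h_d=g_d-g_{d-s}>0$ for $d<t$ and $h_d=0$ for $d\ge t$. (3) If $n\ge1$, then $g^{(1)}_\bullet=|n-1;d_1,\ldots,d_m|$ if and only if $g_d\le g_{d-1}$ for all $d\ge r_0(g_\bullet)$.
   Context: For $P=\sum_{i\ge0}p_iz^i\in\mathbb{Z}[[z]]$ let $t=\min\{d:p_d\le0\}$ and $|P|=\sum q_iz^i$ with $q_i=p_i$ for $i<t$ and $q_i=0$ for $i\ge t$. For integers $n,m\ge0$ and positive integers $d_1,\ldots,d_m$, the Fröberg sequence $|n;d_1,\ldots,d_m|$ is the sequence $(h_0,h_1,\ldots)$ with $\sum h_iz^i=\left|\prod_{j=1}^m(1-z^{d_j})/(1-z)^n\right|$. For a sequence $g_\bullet$ with $g_0=1$, $g^{(1)}_\bullet$ is defined by $g^{(1)}_0=1$ and $g^{(1)}_d=\max\{0,g_d-g_{d-1}\}$ for $d\ge1$, and $r_0(g_\bullet)=\min\{d\ge1:g_d\le g_{d-1}\}$ ($\infty$ if none). *)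

theory Defs
  imports "HOL-Computational_Algebra.Formal_Power_Series" "HOL-Library.Extended_Nat"
begin

text \<open>Truncation |P| of an integer power series given by its coefficient sequence p:
  keep p_i for i < t = min{d. p_d \<le> 0} (t = infinity if no such d), zero afterwards.
  i < t holds iff all p_j with j \<le> i are positive.\<close>
definition trunc_pos :: "(nat \<Rightarrow> int) \<Rightarrow> nat \<Rightarrow> int" where
  "trunc_pos p i = (if \<forall>j\<le>i. p j > 0 then p i else 0)"

definition inv_one_minus_X :: "int fps" where
  "inv_one_minus_X = Abs_fps (\<lambda>_. 1)"


definition froberg :: "nat \<Rightarrow> nat list \<Rightarrow> nat \<Rightarrow> int" where
  "froberg n ds = trunc_pos (fps_nth ((\<Prod>d\<leftarrow>ds. 1 - fps_X ^ d) * inv_one_minus_X ^ n))"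

definition diff1 :: "(nat \<Rightarrow> int) \<Rightarrow> nat \<Rightarrow> int" where
  "diff1 g d = (if d = 0 then 1 else max 0 (g d - g (d - 1)))"

definition r0 :: "(nat \<Rightarrow> int) \<Rightarrow> enat" where
  "r0 g = (if \<exists>d\<ge>1. g d \<le> g (d - 1) then enat (LEAST d. d \<ge> 1 \<and> g d \<le> g (d - 1)) else \<infinity>)"

definition shifted :: "(nat \<Rightarrow> int) \<Rightarrow> nat \<Rightarrow> nat \<Rightarrow> int" where
  "shifted g s d = (if d < s then 0 else g (d - s))"

end

theory Submission
  imports Defs
begin

lemma tp_nonneg: "trunc_pos p i \<ge> 0"
  unfolding trunc_pos_def by auto

lemma tp_pos_iff: "trunc_pos p i > 0 \<longleftrightarrow> (\<forall>j\<le>i. p j > 0)"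
  unfolding trunc_pos_def by auto

lemma tp_zero: "\<exists>j\<le>i. p j \<le> 0 \<Longrightarrow> trunc_pos p i = 0"
  unfolding trunc_pos_def by auto

lemma tp_eq: "\<forall>j\<le>i. p j > 0 \<Longrightarrow> trunc_pos p i = p i"
  unfolding trunc_pos_def by auto

lemma X_shift_mult: "fps_nth ((1 - fps_X ^ s) * (F::int fps)) d = fps_nth F d - (if d < s then 0 else fps_nth F (d - s))"
  by (simp add: algebra_simps fps_X_power_mult_nth fps_X_power_mult_right_nth)

lemma inv_cancel: "(1 - fps_X) * inv_one_minus_X = 1"
proof (rule fps_ext)
  fix d
  have "fps_nth ((1 - fps_X ^ 1) * inv_one_minus_X) d = fps_nth (1::int fps) d"
    by (subst X_shift_mult) (simp add: inv_one_minus_X_def)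
  then show "fps_nth ((1 - fps_X) * inv_one_minus_X) d = fps_nth (1::int fps) d" by simp
qed

lemma prod0: "\<forall>d\<in>set ds. 0 < d \<Longrightarrow> fps_nth (\<Prod>d\<leftarrow>ds. 1 - fps_X ^ d :: int fps) 0 = 1"
proof (induction ds)
  case Nil then show ?case by simp
next
  case (Cons a ds)
  then show ?case by (simp add: fps_mult_nth_0)
qed

lemma part2:
  fixes p :: "nat \<Rightarrow> int"
  assumes p0: "p 0 > 0" and s: "0 < s"
  defines "q \<equiv> \<lambda>d. p d - (if d < s then 0 else p (d - s))"
  defines "g \<equiv> trunc_pos p"
  shows "((\<forall>e\<le>d. g e > shifted g s e) \<longrightarrow>
                 trunc_pos q d = g d - shifted g s d \<and> trunc_pos q d > 0)
            \<and> ((\<exists>e\<le>d. g e \<le> shifted g s e) \<longrightarrow> trunc_pos q d = 0)"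
proof (intro conjI impI)
  have sh_nn: "shifted g s e \<ge> 0" for e
    unfolding shifted_def g_def using tp_nonneg by auto
  assume A: "\<forall>e\<le>d. g e > shifted g s e"
  have pp: "\<forall>e\<le>d. p e > 0"
  proof (intro allI impI, rule ccontr)
    fix e assume "e \<le> d" "\<not> 0 < p e"
    then have "g e = 0" unfolding g_def by (intro tp_zero) auto
    with A sh_nn \<open>e \<le> d\<close> show False by (metis not_le)
  qed
  have qe: "q e = g e - shifted g s e" if "e \<le> d" for e
    using pp that unfolding q_def g_def shifted_def
    by (auto simp: tp_eq)
  have qp: "\<forall>e\<le>d. q e > 0" using A qe by auto
  show "trunc_pos q d = g d - shifted g s d" using tp_eq[OF qp] qe by auto
  show "trunc_pos q d > 0" using qp tp_pos_iff by blast
next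
  assume "\<exists>e\<le>d. g e \<le> shifted g s e"
  then obtain e where e: "e \<le> d" "g e \<le> shifted g s e" by blast
  show "trunc_pos q d = 0"
  proof (rule tp_zero)
    show "\<exists>j\<le>d. q j \<le> 0"
    proof (cases "\<forall>j\<le>e. p j > 0")
      case True
      have "q e = g e - shifted g s e"
        using True unfolding q_def g_def shifted_def by (auto simp: tp_eq)
      then show ?thesis using e by (intro exI[of _ e]) auto
    next
      case False
      then obtain j where j: "j \<le> e" "p j \<le> 0" by (auto simp: not_less)
      define t where "t = (LEAST j. p j \<le> 0)"
      have t1: "p t \<le> 0" unfolding t_def using j by (metis LeastI)
      have t2: "t \<le> e" unfolding t_def using j by (metis Least_le order.trans)
      have t3: "p i > 0" if "i < t" for i
        using that unfolding t_def using not_less_Least not_le by blast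
      have "t - s < t" if "\<not> t < s" using s that by simp
      have "q t \<le> 0" unfolding q_def using t1 t3[of "t - s"] s \<open>\<not> t < s \<Longrightarrow> t - s < t\<close>
        by (cases "t < s") (auto simp: not_less)
      then show ?thesis using t2 e by (intro exI[of _ t]) auto
    qed
  qed
qed


lemma part3:
  fixes p :: "nat \<Rightarrow> int"
  assumes p0: "p 0 = 1"
  defines "r \<equiv> \<lambda>d. p d - (if d < 1 then 0 else p (d - 1))"
  defines "g \<equiv> trunc_pos p"
  shows "diff1 g = trunc_pos r \<longleftrightarrow> (\<forall>d. r0 g \<le> enat d \<longrightarrow> g d \<le> g (d - 1))"
proof -
  define inc where "inc d \<longleftrightarrow> (\<forall>j. 1 \<le> j \<and> j \<le> d \<longrightarrow> g j > g (j - 1))" for d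
  have g0: "g 0 = 1" unfolding g_def using p0 by (simp add: trunc_pos_def)
  have ge1: "inc d \<Longrightarrow> j \<le> d \<Longrightarrow> g j \<ge> 1" for d j
  proof (induction j)
    case 0 then show ?case using g0 by simp
  next
    case (Suc j)
    then have "1 \<le> Suc j \<and> Suc j \<le> d" by simp
    then have "g (Suc j) > g (Suc j - 1)" using Suc.prems(1) unfolding inc_def by blast
    then have "g (Suc j) > g j" by simp
    with Suc show ?case by simp
  qed
  have incp: "inc d \<Longrightarrow> \<forall>j\<le>d. p j > 0" for d
    using ge1[of d d] tp_pos_iff[of p d] unfolding g_def by auto
  have A: "inc d \<Longrightarrow> trunc_pos r d = diff1 g d" for d
  proof -
    assume i: "inc d"
    have gp: "j \<le> d \<Longrightarrow> g j = p j" for j using incp[OF i] unfolding g_def by (auto simp: tp_eq)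
    have rr: "\<forall>j\<le>d. r j > 0"
    proof (intro allI impI)
      fix j assume j: "j \<le> d"
      show "r j > 0"
      proof (cases "j = 0")
        case True then show ?thesis using p0 r_def by simp
      next
        case False
        then have "g j > g (j - 1)" using i j unfolding inc_def by auto
        then show ?thesis using gp[of j] gp[of "j-1"] j False unfolding r_def by auto
      qed
    qed
    show ?thesis
    proof (cases "d = 0")
      case True then show ?thesis using tp_eq[OF rr] p0 by (simp add: r_def diff1_def)
    next
      case False
      then show ?thesis using tp_eq[OF rr] rr gp[of d] gp[of "d-1"]
        by (auto simp: r_def diff1_def)
    qed
  qed
  have B: "\<not> inc d \<Longrightarrow> trunc_pos r d = 0" for d
  proof -
    assume ni: "\<not> inc d"
    then have ex: "\<exists>j. (1 \<le> j \<and> j \<le> d) \<and> g j \<le> g (j - 1)" unfolding inc_def by auto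
    define j0 where "j0 = (LEAST j. (1 \<le> j \<and> j \<le> d) \<and> g j \<le> g (j - 1))"
    have j0: "1 \<le> j0" "j0 \<le> d" "g j0 \<le> g (j0 - 1)"
      using LeastI_ex[OF ex] unfolding j0_def by auto
    have "inc (j0 - 1)" unfolding inc_def
    proof (intro allI impI)
      fix j assume j: "1 \<le> j \<and> j \<le> j0 - 1"
      then have "j < j0" by auto
      then have "\<not> ((1 \<le> j \<and> j \<le> d) \<and> g j \<le> g (j - 1))"
        unfolding j0_def using not_less_Least by blast
      then show "g j > g (j - 1)" using j j0 by auto
    qed
    then have pp: "\<forall>i\<le>j0-1. p i > 0" using incp by blast
    have "r j0 \<le> 0"
    proof (cases "p j0 > 0")
      case True
      have "\<forall>i\<le>j0. p i > 0"
      proof (intro allI impI)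
        fix i assume "i \<le> j0"
        then consider "i = j0" | "i \<le> j0 - 1" by linarith
        then show "p i > 0" using True pp by cases auto
      qed
      then have "g j0 = p j0" "g (j0 - 1) = p (j0 - 1)" unfolding g_def by (auto simp: tp_eq)
      then show ?thesis using j0 unfolding r_def by auto
    next
      case False
      then show ?thesis using pp j0 unfolding r_def by auto
    qed
    then show ?thesis using j0 by (intro tp_zero) auto
  qed
  have R: "r0 g \<le> enat d \<longleftrightarrow> \<not> inc d" for d
  proof
    assume "r0 g \<le> enat d"
    then have ex: "\<exists>d\<ge>1. g d \<le> g (d - 1)" and le: "(LEAST d. d \<ge> 1 \<and> g d \<le> g (d - 1)) \<le> d"
      unfolding r0_def by (auto split: if_splits)
    have "(LEAST d. d \<ge> 1 \<and> g d \<le> g (d - 1)) \<ge> 1 \<and> g (LEAST d. d \<ge> 1 \<and> g d \<le> g (d - 1)) \<le> g ((LEAST d. d \<ge> 1 \<and> g d \<le> g (d - 1)) - 1)"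
      using LeastI_ex[of "\<lambda>d. d \<ge> 1 \<and> g d \<le> g (d - 1)"] ex by blast
    then show "\<not> inc d" using le unfolding inc_def not_all not_imp not_less by blast
  next
    assume "\<not> inc d"
    then obtain j where j: "1 \<le> j" "j \<le> d" "g j \<le> g (j - 1)" unfolding inc_def by (auto simp: not_less)
    then have "(LEAST d. d \<ge> 1 \<and> g d \<le> g (d - 1)) \<le> j" by (intro Least_le) auto
    then show "r0 g \<le> enat d" unfolding r0_def using j by auto
  qed
  have inc0: "inc 0" unfolding inc_def by auto
  show ?thesis
  proof
    assume E: "diff1 g = trunc_pos r"
    show "\<forall>d. r0 g \<le> enat d \<longrightarrow> g d \<le> g (d - 1)"
    proof (intro allI impI)
      fix d assume "r0 g \<le> enat d"
      then have ni: "\<not> inc d" using R by auto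
      then have "d \<noteq> 0" using inc0 by (cases "d = 0") simp_all
      have "diff1 g d = 0" using E B[OF ni] by simp
      then show "g d \<le> g (d - 1)" using \<open>d \<noteq> 0\<close> by (auto simp: diff1_def max_def split: if_splits)
    qed
  next
    assume H: "\<forall>d. r0 g \<le> enat d \<longrightarrow> g d \<le> g (d - 1)"
    show "diff1 g = trunc_pos r"
    proof
      fix d show "diff1 g d = trunc_pos r d"
      proof (cases "inc d")
        case True then show ?thesis using A by simp
      next
        case False
        then have "d \<noteq> 0" using inc0 by (cases "d = 0") simp_all
        have "g d \<le> g (d - 1)" using H R False by auto
        then show ?thesis using B[OF False] \<open>d \<noteq> 0\<close> by (simp add: diff1_def)
      qed
    qed
  qed
qed

theorem lemma4p3:
  fixes n :: nat and ds :: "nat list"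
  assumes "\<forall>d\<in>set ds. 0 < d"
  shows "(n \<ge> 1 \<longrightarrow> froberg n (ds @ [1]) = froberg (n - 1) ds)
    \<and> (\<forall>s::nat. 0 < s \<longrightarrow>
         (\<forall>d. ((\<forall>e\<le>d. froberg n ds e > shifted (froberg n ds) s e) \<longrightarrow>
                 froberg n (ds @ [s]) d = froberg n ds d - shifted (froberg n ds) s d
               \<and> froberg n (ds @ [s]) d > 0)
            \<and> ((\<exists>e\<le>d. froberg n ds e \<le> shifted (froberg n ds) s e) \<longrightarrow>
                 froberg n (ds @ [s]) d = 0)))
    \<and> (n \<ge> 1 \<longrightarrow>
         (diff1 (froberg n ds) = froberg (n - 1) ds \<longleftrightarrow>
          (\<forall>d. r0 (froberg n ds) \<le> enat d \<longrightarrow> froberg n ds d \<le> froberg n ds (d - 1))))"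
proof -
  define P where "P = (\<Prod>d\<leftarrow>ds. 1 - fps_X ^ d :: int fps)"
  define p where "p = fps_nth (P * inv_one_minus_X ^ n)"
  have fn: "froberg n ds = trunc_pos p" unfolding froberg_def p_def P_def by simp
  have p0: "p 0 = 1" unfolding p_def using prod0[OF assms]
    by (simp add: fps_mult_nth_0 P_def fps_nth_power_0 inv_one_minus_X_def)
  have app: "froberg n (ds @ [s]) = trunc_pos (fps_nth ((1 - fps_X ^ s) * (P * inv_one_minus_X ^ n)))" for s
    unfolding froberg_def P_def by (simp add: algebra_simps)
  have app2: "froberg n (ds @ [s]) = trunc_pos (\<lambda>d. p d - (if d < s then 0 else p (d - s)))" for s
    unfolding app X_shift_mult p_def ..
  have inv_n: "n \<ge> 1 \<Longrightarrow> inv_one_minus_X ^ n = inv_one_minus_X * inv_one_minus_X ^ (n - 1)"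
    by (cases n) auto
  have part1: "n \<ge> 1 \<Longrightarrow> froberg n (ds @ [1]) = froberg (n - 1) ds"
  proof -
    assume n: "n \<ge> 1"
    have EQ: "(1 - fps_X ^ 1) * (P * inv_one_minus_X ^ n) = P * inv_one_minus_X ^ (n - 1)"
    proof -
      have "(1 - fps_X ^ 1) * (P * inv_one_minus_X ^ n) = P * (((1 - fps_X) * inv_one_minus_X) * inv_one_minus_X ^ (n - 1))"
        unfolding inv_n[OF n] by (simp only: power_one_right mult_ac)
      then show ?thesis unfolding inv_cancel by simp
    qed
    show ?thesis unfolding app EQ unfolding froberg_def P_def ..
  qed
  have p1: "froberg (n - 1) ds = trunc_pos (\<lambda>d. p d - (if d < 1 then 0 else p (d - 1)))" if "n \<ge> 1"
    using part1[OF that] app2[of 1] by simp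
  have P2: "\<forall>s::nat. 0 < s \<longrightarrow>
         (\<forall>d. ((\<forall>e\<le>d. froberg n ds e > shifted (froberg n ds) s e) \<longrightarrow>
                 froberg n (ds @ [s]) d = froberg n ds d - shifted (froberg n ds) s d
               \<and> froberg n (ds @ [s]) d > 0)
            \<and> ((\<exists>e\<le>d. froberg n ds e \<le> shifted (froberg n ds) s e) \<longrightarrow>
                 froberg n (ds @ [s]) d = 0))"
  proof (intro allI impI)
    fix s d :: nat assume "0 < s"
    from part2[of p s d, OF _ this] p0 show "((\<forall>e\<le>d. froberg n ds e > shifted (froberg n ds) s e) \<longrightarrow>
                 froberg n (ds @ [s]) d = froberg n ds d - shifted (froberg n ds) s d
               \<and> froberg n (ds @ [s]) d > 0)
            \<and> ((\<exists>e\<le>d. froberg n ds e \<le> shifted (froberg n ds) s e) \<longrightarrow>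
                 froberg n (ds @ [s]) d = 0)" unfolding fn app2 by simp
  qed
  have P3: "n \<ge> 1 \<longrightarrow>
         (diff1 (froberg n ds) = froberg (n - 1) ds \<longleftrightarrow>
          (\<forall>d. r0 (froberg n ds) \<le> enat d \<longrightarrow> froberg n ds d \<le> froberg n ds (d - 1)))"
  proof
    assume "n \<ge> 1"
    show "diff1 (froberg n ds) = froberg (n - 1) ds \<longleftrightarrow>
          (\<forall>d. r0 (froberg n ds) \<le> enat d \<longrightarrow> froberg n ds d \<le> froberg n ds (d - 1))"
      unfolding p1[OF \<open>n \<ge> 1\<close>] fn by (rule part3[of p, OF p0])
  qed
  show ?thesis using part1 P2 P3 by blast
qed

end
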